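(* Let $\mathcal{X}\subseteq\mathbb{R}^d$ be closed convex, $\mathcal{Z}$ a set, $f:\mathcal{X}\times\mathcal{Z}\to\mathbb{R}$ with $f(\cdot,z)$ convex and $L$-Lipschitz for all $z$, and $S=(z_1,\dots,z_n)\in\mathcal{Z}^n$ with $F_S(x)=\frac1n\sum_{i=1}^nf(x,z_i)$ and minimizer $x^*(S)\in\arg\min_{x\in\mathcal{X}}F_S(x)$. Let $\pi$ be an arbitrary permutation of $[n]$ and run fixed-permutation SGD for $K$ epochs with step size constant within each epoch: from $x^1_1=x^1\in\mathcal{X}$, $x^k_1=x^{k-1}_{n+1}$ for $k\ge2$ and $x^k_{t+1}=\mathsf{Proj}_{\mathcal{X}}(x^k_t-\eta_k\nabla f(x^k_t,z_{\pi(t)}))$ for $t=1,\dots,n$, with $\eta_k>0$; output $\bar x^K=\frac{1}{\sum_{k=1}^K\eta_k}\sum_{k=1}^K\eta_kx^k_1$. Then $$F_S(\bar x^K)-F_S(x^*(S))\le\frac{\|x^1-x^*(S)\|^2}{2n\sum_{k}\eta_k}+\frac{L^2(n+2)}{2}\cdot\frac{\sum_k\eta_k^2}{\sum_k\eta_k}.$$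
   Context: $\|\cdot\|$ is the Euclidean norm and $\mathsf{Proj}_{\mathcal{X}}$ the Euclidean projection; $\nabla f(x,z)$ is a fixed selection of a subgradient of $f(\cdot,z)$ at $x$, assumed to have norm at most $L$ (Lipschitz on an open set containing $\mathcal{X}$). Sums over $k$ range over $k=1,\dots,K$. *)

theory Defs
  imports "HOL-Analysis.Analysis"
begin

definition emp_risk :: "('a \<Rightarrow> 'z \<Rightarrow> real) \<Rightarrow> (nat \<Rightarrow> 'z) \<Rightarrow> nat \<Rightarrow> 'a \<Rightarrow> real" where
  "emp_risk f z n x = (\<Sum>i=1..n. f x (z i)) / real n"

text \<open>One pass of projected SGD with step size eta over the permuted data:
  sgd_pass ... x t is x_{t+1} when started from x_1 = x; step t (1-based) uses z_(pi t).\<close>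
primrec sgd_pass :: "'a::euclidean_space set \<Rightarrow> ('a \<Rightarrow> 'z \<Rightarrow> 'a) \<Rightarrow> (nat \<Rightarrow> 'z) \<Rightarrow> (nat \<Rightarrow> nat)
    \<Rightarrow> real \<Rightarrow> 'a \<Rightarrow> nat \<Rightarrow> 'a" where
  "sgd_pass X g z \<pi> eta x 0 = x"
| "sgd_pass X g z \<pi> eta x (Suc t) =
     (let y = sgd_pass X g z \<pi> eta x t in closest_point X (y - eta *\<^sub>R g y (z (\<pi> (Suc t)))))"

text \<open>Epoch starting points: sgd_start ... m = x^{m+1}_1 (so x^k_1 = sgd_start ... (k-1)).
  Epoch k uses step size eta k.\<close>
primrec sgd_start :: "'a::euclidean_space set \<Rightarrow> ('a \<Rightarrow> 'z \<Rightarrow> 'a) \<Rightarrow> (nat \<Rightarrow> 'z) \<Rightarrow> (nat \<Rightarrow> nat)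
    \<Rightarrow> (nat \<Rightarrow> real) \<Rightarrow> nat \<Rightarrow> 'a \<Rightarrow> nat \<Rightarrow> 'a" where
  "sgd_start X g z \<pi> eta n x1 0 = x1"
| "sgd_start X g z \<pi> eta n x1 (Suc m) =
     sgd_pass X g z \<pi> (eta (Suc m)) (sgd_start X g z \<pi> eta n x1 m) n"

definition sgd_avg :: "'a::euclidean_space set \<Rightarrow> ('a \<Rightarrow> 'z \<Rightarrow> 'a) \<Rightarrow> (nat \<Rightarrow> 'z) \<Rightarrow> (nat \<Rightarrow> nat)
    \<Rightarrow> (nat \<Rightarrow> real) \<Rightarrow> nat \<Rightarrow> 'a \<Rightarrow> nat \<Rightarrow> 'a" where
  "sgd_avg X g z \<pi> eta n x1 K =
     (1 / (\<Sum>k=1..K. eta k)) *\<^sub>R (\<Sum>k=1..K. eta k *\<^sub>R sgd_start X g z \<pi> eta n x1 (k - 1))"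

end

theory Submission
  imports Defs
begin

lemma norm_sq_expand: "(norm ((a::'a::euclidean_space) - e *\<^sub>R v))\<^sup>2 = (norm a)\<^sup>2 - 2 * e * inner v a + e\<^sup>2 * (norm v)\<^sup>2"
  unfolding power2_norm_eq_inner
  by (simp add: inner_diff_left inner_diff_right inner_commute[of a v] power2_eq_square algebra_simps)

theorem corollaryC2:
  fixes X :: "'a::euclidean_space set" and Z :: "'z set"
    and f :: "'a \<Rightarrow> 'z \<Rightarrow> real" and g :: "'a \<Rightarrow> 'z \<Rightarrow> 'a"
    and L :: real and n K :: nat and z :: "nat \<Rightarrow> 'z" and \<pi> :: "nat \<Rightarrow> nat"
    and eta :: "nat \<Rightarrow> real" and x1 xstar :: 'a
  assumes "closed X" and "convex X"
    and convex: "\<And>z'. z' \<in> Z \<Longrightarrow> convex_on X (\<lambda>x. f x z')"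
    and lipschitz: "\<And>z'. z' \<in> Z \<Longrightarrow> L-lipschitz_on X (\<lambda>x. f x z')"
    and subgrad: "\<And>z' x y. z' \<in> Z \<Longrightarrow> x \<in> X \<Longrightarrow> y \<in> X \<Longrightarrow>
                    f y z' \<ge> f x z' + inner (g x z') (y - x)"
    and subgrad_bound: "\<And>z' x. z' \<in> Z \<Longrightarrow> x \<in> X \<Longrightarrow> norm (g x z') \<le> L"
    and "n \<ge> 1" and data: "\<And>i. i \<in> {1..n} \<Longrightarrow> z i \<in> Z"
    and perm: "\<pi> permutes {1..n}"
    and "K \<ge> 1" and eta_pos: "\<And>k. k \<in> {1..K} \<Longrightarrow> eta k > 0"
    and "x1 \<in> X"
    and xstar: "xstar \<in> X" "\<And>x. x \<in> X \<Longrightarrow> emp_risk f z n xstar \<le> emp_risk f z n x"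
  shows "emp_risk f z n (sgd_avg X g z \<pi> eta n x1 K) - emp_risk f z n xstar
     \<le> (norm (x1 - xstar))\<^sup>2 / (2 * real n * (\<Sum>k=1..K. eta k))
       + L\<^sup>2 * (real n + 2) / 2 * ((\<Sum>k=1..K. (eta k)\<^sup>2) / (\<Sum>k=1..K. eta k))"
proof -
  let ?F = "emp_risk f z n"
  let ?P = "\<lambda>e x t. sgd_pass X g z \<pi> e x t"
  have Xne: "X \<noteq> {}" using \<open>x1 \<in> X\<close> by auto
  have zpi: "z (\<pi> s) \<in> Z" if "s \<in> {1..n}" for s
  proof -
    have "\<pi> s \<in> {1..n}" using permutes_in_image[OF perm] that by blast
    thus ?thesis using data by blast
  qed
  have L0: "0 \<le> L" using subgrad_bound[OF data[of 1] \<open>x1 \<in> X\<close>] \<open>n \<ge> 1\<close>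
    by (meson atLeastAtMost_iff norm_ge_zero order.trans order_refl)
  have step: "closest_point X (x - e *\<^sub>R g x z') \<in> X
      \<and> norm (closest_point X (x - e *\<^sub>R g x z') - x) \<le> e * L
      \<and> (norm (closest_point X (x - e *\<^sub>R g x z') - u))\<^sup>2 \<le> (norm (x - u))\<^sup>2 - 2 * e * (f x z' - f u z') + e\<^sup>2 * L\<^sup>2"
    if x: "x \<in> X" and u: "u \<in> X" and zz: "z' \<in> Z" and e: "e \<ge> 0" for x u z' e
  proof -
    let ?y = "closest_point X (x - e *\<^sub>R g x z')"
    let ?v = "g x z'"
    have yX: "?y \<in> X" using closest_point_in_set[OF \<open>closed X\<close> Xne] by blast
    have nb: "norm ?v \<le> L" using subgrad_bound zz x by blast
    have d1: "dist ?y (closest_point X x) \<le> dist (x - e *\<^sub>R ?v) x"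
      by (rule closest_point_lipschitz[OF \<open>convex X\<close> \<open>closed X\<close> Xne])
    hence "norm (?y - x) \<le> e * norm ?v" using closest_point_self[OF x] e by (simp add: dist_norm)
    also have "\<dots> \<le> e * L" using nb e by (simp add: mult_left_mono)
    finally have n1: "norm (?y - x) \<le> e * L" .
    have d2: "dist ?y (closest_point X u) \<le> dist (x - e *\<^sub>R ?v) u"
      by (rule closest_point_lipschitz[OF \<open>convex X\<close> \<open>closed X\<close> Xne])
    hence "norm (?y - u) \<le> norm ((x - u) - e *\<^sub>R ?v)" using closest_point_self[OF u]
      by (simp add: dist_norm algebra_simps)
    hence "(norm (?y - u))\<^sup>2 \<le> (norm ((x - u) - e *\<^sub>R ?v))\<^sup>2"
      by (simp add: power_mono)
    also have "\<dots> = (norm (x - u))\<^sup>2 - 2 * e * inner ?v (x - u) + e\<^sup>2 * (norm ?v)\<^sup>2"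
      by (rule norm_sq_expand)
    also have "\<dots> \<le> (norm (x - u))\<^sup>2 - 2 * e * (f x z' - f u z') + e\<^sup>2 * L\<^sup>2"
    proof -
      have "f u z' \<ge> f x z' + inner ?v (u - x)" using subgrad zz x u by blast
      hence "inner ?v (x - u) \<ge> f x z' - f u z'" by (simp add: inner_diff_right)
      hence a: "2 * e * inner ?v (x - u) \<ge> 2 * e * (f x z' - f u z')" using e
        by (simp add: mult_left_mono)
      have "(norm ?v)\<^sup>2 \<le> L\<^sup>2" using nb by (simp add: power_mono)
      hence "e\<^sup>2 * (norm ?v)\<^sup>2 \<le> e\<^sup>2 * L\<^sup>2" by (simp add: mult_left_mono)
      thus ?thesis using a by linarith
    qed
    finally show ?thesis using yX n1 by blast
  qed
  have pass: "t \<le> n \<longrightarrow> ?P e x t \<in> X \<and> norm (?P e x t - x) \<le> real t * e * L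
      \<and> (norm (?P e x t - u))\<^sup>2 \<le> (norm (x - u))\<^sup>2
          - 2 * e * (\<Sum>s=1..t. f x (z (\<pi> s)) - f u (z (\<pi> s))) + (real t)\<^sup>2 * e\<^sup>2 * L\<^sup>2"
    if x: "x \<in> X" and u: "u \<in> X" and e: "e \<ge> 0" for x u e t
  proof (induction t)
    case 0
    then show ?case using x by simp
  next
    case (Suc t)
    show ?case
    proof
      assume le: "Suc t \<le> n"
      let ?y = "?P e x t"
      let ?z = "z (\<pi> (Suc t))"
      have IH: "?y \<in> X" "norm (?y - x) \<le> real t * e * L"
        "(norm (?y - u))\<^sup>2 \<le> (norm (x - u))\<^sup>2
          - 2 * e * (\<Sum>s=1..t. f x (z (\<pi> s)) - f u (z (\<pi> s))) + (real t)\<^sup>2 * e\<^sup>2 * L\<^sup>2"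
        using Suc le by auto
      have zz: "?z \<in> Z" using zpi le by simp
      have S: "?P e x (Suc t) = closest_point X (?y - e *\<^sub>R g ?y ?z)" by (simp add: Let_def)
      note st = step[OF IH(1) u zz e, folded S]
      have "norm (?P e x (Suc t) - x) \<le> norm (?P e x (Suc t) - ?y) + norm (?y - x)"
        using norm_triangle_ineq[of "?P e x (Suc t) - ?y" "?y - x"] by simp
      also have "\<dots> \<le> e * L + real t * e * L" using st IH by linarith
      finally have n1: "norm (?P e x (Suc t) - x) \<le> real (Suc t) * e * L"
        by (simp add: algebra_simps)
      have fx: "f ?y ?z \<ge> f x ?z - L * (real t * e * L)"
      proof -
        have "f ?y ?z \<ge> f x ?z + inner (g x ?z) (?y - x)" using subgrad zz x IH(1) by blast
        moreover have "inner (g x ?z) (?y - x) \<ge> - (norm (g x ?z) * norm (?y - x))"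
          using Cauchy_Schwarz_ineq2[of "g x ?z" "?y - x"] by (simp add: abs_le_iff)
        moreover have "norm (g x ?z) * norm (?y - x) \<le> L * (real t * e * L)"
          using IH(2) subgrad_bound[OF zz x] by (simp add: mult_mono L0)
        ultimately show ?thesis by linarith
      qed
      have "(norm (?P e x (Suc t) - u))\<^sup>2 \<le> (norm (?y - u))\<^sup>2 - 2 * e * (f ?y ?z - f u ?z) + e\<^sup>2 * L\<^sup>2"
        using st by blast
      also have "\<dots> \<le> (norm (?y - u))\<^sup>2 - 2 * e * (f x ?z - f u ?z) + 2 * e * (L * (real t * e * L)) + e\<^sup>2 * L\<^sup>2"
      proof -
        have "2 * e * (f x ?z - L * (real t * e * L)) \<le> 2 * e * f ?y ?z" using fx e by (simp add: mult_left_mono)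
        thus ?thesis by (simp add: algebra_simps)
      qed
      also have "\<dots> \<le> (norm (x - u))\<^sup>2
          - 2 * e * (\<Sum>s=1..Suc t. f x (z (\<pi> s)) - f u (z (\<pi> s))) + (real (Suc t))\<^sup>2 * e\<^sup>2 * L\<^sup>2"
      proof -
        have "(real (Suc t))\<^sup>2 * e\<^sup>2 * L\<^sup>2 = (real t)\<^sup>2 * e\<^sup>2 * L\<^sup>2 + 2 * e * (L * (real t * e * L)) + e\<^sup>2 * L\<^sup>2"
          by (simp add: power2_eq_square algebra_simps)
        thus ?thesis using IH(3) by (simp add: algebra_simps)
      qed
      finally show "?P e x (Suc t) \<in> X \<and> norm (?P e x (Suc t) - x) \<le> real (Suc t) * e * L
      \<and> (norm (?P e x (Suc t) - u))\<^sup>2 \<le> (norm (x - u))\<^sup>2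
          - 2 * e * (\<Sum>s=1..Suc t. f x (z (\<pi> s)) - f u (z (\<pi> s))) + (real (Suc t))\<^sup>2 * e\<^sup>2 * L\<^sup>2"
        using st n1 by blast
    qed
  qed
  have Fn: "real n * ?F y = (\<Sum>i=1..n. f y (z i))" for y
    using \<open>n \<ge> 1\<close> by (simp add: emp_risk_def)
  have epoch: "?P e x n \<in> X \<and> 2 * e * real n * (?F x - ?F xstar)
      \<le> (norm (x - xstar))\<^sup>2 - (norm (?P e x n - xstar))\<^sup>2 + (real n)\<^sup>2 * e\<^sup>2 * L\<^sup>2"
    if x: "x \<in> X" and e: "e \<ge> 0" for x e
  proof -
    have p: "?P e x n \<in> X" "(norm (?P e x n - xstar))\<^sup>2 \<le> (norm (x - xstar))\<^sup>2
          - 2 * e * (\<Sum>s=1..n. f x (z (\<pi> s)) - f xstar (z (\<pi> s))) + (real n)\<^sup>2 * e\<^sup>2 * L\<^sup>2"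
      using pass[OF x xstar(1) e, of n] by auto
    have "(\<Sum>s=1..n. f x (z (\<pi> s)) - f xstar (z (\<pi> s))) = (\<Sum>i=1..n. f x (z i) - f xstar (z i))"
      using sum.permute[OF perm, of "\<lambda>i. f x (z i) - f xstar (z i)"] by (simp add: comp_def)
    also have "\<dots> = real n * (?F x - ?F xstar)" by (simp add: Fn sum_subtractf right_diff_distrib)
    finally have "2 * e * (\<Sum>s=1..n. f x (z (\<pi> s)) - f xstar (z (\<pi> s))) = 2 * e * real n * (?F x - ?F xstar)"
      by simp
    thus ?thesis using p by linarith
  qed
  let ?s = "sgd_start X g z \<pi> eta n x1"
  have tele: "K' \<le> K \<longrightarrow> ?s K' \<in> X \<and> (\<Sum>k=1..K'. 2 * eta k * real n * (?F (?s (k-1)) - ?F xstar))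
      \<le> (norm (x1 - xstar))\<^sup>2 - (norm (?s K' - xstar))\<^sup>2 + (real n)\<^sup>2 * L\<^sup>2 * (\<Sum>k=1..K'. (eta k)\<^sup>2)" for K'
  proof (induction K')
    case 0
    then show ?case using \<open>x1 \<in> X\<close> by simp
  next
    case (Suc K')
    show ?case
    proof
      assume le: "Suc K' \<le> K"
      hence IH: "?s K' \<in> X" "(\<Sum>k=1..K'. 2 * eta k * real n * (?F (?s (k-1)) - ?F xstar))
      \<le> (norm (x1 - xstar))\<^sup>2 - (norm (?s K' - xstar))\<^sup>2 + (real n)\<^sup>2 * L\<^sup>2 * (\<Sum>k=1..K'. (eta k)\<^sup>2)"
        using Suc by auto
      have ep: "eta (Suc K') \<ge> 0" using eta_pos[of "Suc K'"] le by simp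
      note E = epoch[OF IH(1) ep]
      have S: "?s (Suc K') = ?P (eta (Suc K')) (?s K') n" by simp
      show "?s (Suc K') \<in> X \<and> (\<Sum>k=1..Suc K'. 2 * eta k * real n * (?F (?s (k-1)) - ?F xstar))
      \<le> (norm (x1 - xstar))\<^sup>2 - (norm (?s (Suc K') - xstar))\<^sup>2 + (real n)\<^sup>2 * L\<^sup>2 * (\<Sum>k=1..Suc K'. (eta k)\<^sup>2)"
        unfolding S using E IH(2) by (simp add: algebra_simps)
    qed
  qed
  let ?S = "\<Sum>k=1..K. eta k"
  let ?Q = "\<Sum>k=1..K. (eta k)\<^sup>2"
  have Spos: "?S > 0"
    using \<open>K \<ge> 1\<close> eta_pos by (intro sum_pos) auto
  have sX: "?s (k-1) \<in> X" if "k \<in> {1..K}" for k using tele[of "k-1"] that by auto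
  have T: "(\<Sum>k=1..K. 2 * eta k * real n * (?F (?s (k-1)) - ?F xstar))
      \<le> (norm (x1 - xstar))\<^sup>2 + (real n)\<^sup>2 * L\<^sup>2 * ?Q"
    using tele[of K] zero_le_power2[of "norm (?s K - xstar)"] by linarith
  let ?a = "\<lambda>k. eta k / ?S"
  have asum: "(\<Sum>k=1..K. ?a k) = 1" using Spos by (simp add: sum_divide_distrib[symmetric])
  have apos: "\<And>k. k \<in> {1..K} \<Longrightarrow> ?a k \<ge> 0" using eta_pos Spos by (simp add: less_imp_le)
  have avg: "sgd_avg X g z \<pi> eta n x1 K = (\<Sum>k=1..K. ?a k *\<^sub>R ?s (k-1))"
    unfolding sgd_avg_def by (simp add: scaleR_sum_right divide_inverse_commute)
  have J: "?F (sgd_avg X g z \<pi> eta n x1 K) \<le> (\<Sum>k=1..K. ?a k * ?F (?s (k-1)))"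
  proof -
    have "f (sgd_avg X g z \<pi> eta n x1 K) (z i) \<le> (\<Sum>k=1..K. ?a k * f (?s (k-1)) (z i))"
      if i: "i \<in> {1..n}" for i
      unfolding avg
      by (rule convex_on_sum[where C=X]) (use \<open>K \<ge> 1\<close> convex data[OF i] asum apos sX in auto)
    hence "(\<Sum>i=1..n. f (sgd_avg X g z \<pi> eta n x1 K) (z i)) \<le> (\<Sum>i=1..n. \<Sum>k=1..K. ?a k * f (?s (k-1)) (z i))"
      by (rule sum_mono)
    also have "\<dots> = (\<Sum>k=1..K. ?a k * (\<Sum>i=1..n. f (?s (k-1)) (z i)))"
      by (subst sum.swap) (simp add: sum_distrib_left)
    finally have "(\<Sum>i=1..n. f (sgd_avg X g z \<pi> eta n x1 K) (z i)) / real n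
       \<le> (\<Sum>k=1..K. ?a k * (\<Sum>i=1..n. f (?s (k-1)) (z i))) / real n"
      by (rule divide_right_mono) simp
    also have "\<dots> = (\<Sum>k=1..K. ?a k * ?F (?s (k-1)))"
      unfolding emp_risk_def sum_divide_distrib by (simp add: sum_divide_distrib[symmetric])
    finally show ?thesis by (simp add: emp_risk_def)
  qed
  have "(\<Sum>k=1..K. ?a k * ?F (?s (k-1))) - ?F xstar = (\<Sum>k=1..K. ?a k * (?F (?s (k-1)) - ?F xstar))"
  proof -
    have c: "(\<Sum>k=1..K. ?a k * c) = c" for c by (metis asum sum_distrib_right mult_1)
    show ?thesis by (simp only: right_diff_distrib sum_subtractf c)
  qed
  also have "\<dots> = (\<Sum>k=1..K. 2 * eta k * real n * (?F (?s (k-1)) - ?F xstar)) / (2 * real n * ?S)"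
    using \<open>n \<ge> 1\<close> by (simp add: sum_divide_distrib)
  also have "\<dots> \<le> ((norm (x1 - xstar))\<^sup>2 + (real n)\<^sup>2 * L\<^sup>2 * ?Q) / (2 * real n * ?S)"
    using T Spos \<open>n \<ge> 1\<close> by (intro divide_right_mono) auto
  also have "\<dots> = (norm (x1 - xstar))\<^sup>2 / (2 * real n * ?S) + L\<^sup>2 * real n / 2 * (?Q / ?S)"
    using \<open>n \<ge> 1\<close> by (simp add: add_divide_distrib power2_eq_square)
  also have "\<dots> \<le> (norm (x1 - xstar))\<^sup>2 / (2 * real n * ?S) + L\<^sup>2 * (real n + 2) / 2 * (?Q / ?S)"
  proof -
    have q: "?Q / ?S \<ge> 0" using Spos by (simp add: sum_nonneg)
    have "L\<^sup>2 * real n / 2 \<le> L\<^sup>2 * (real n + 2) / 2" by (simp add: mult_left_mono)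
    hence "L\<^sup>2 * real n / 2 * (?Q / ?S) \<le> L\<^sup>2 * (real n + 2) / 2 * (?Q / ?S)"
      using q by (rule mult_right_mono)
    thus ?thesis by linarith
  qed
  finally show ?thesis using J by linarith
qed

end
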